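(* In the setting described in the context, let $U_0,\dots,U_d$ be one of the six decompositions below, with $U_{-1}=U_{d+1}=0$ and empty sums equal to $0$. Then for $0\le i\le d$: $[0D]$: $(K^*-q^{d-2i}I)U_i\subseteq U_{i-1}$ and $(K^{*-1}-q^{2i-d}I)U_i\subseteq U_0+\cdots+U_{i-1}$; $[0^*D^*]$: $(K^*-q^{d-2i}I)U_i\subseteq U_{i+1}+\cdots+U_d$ and $(K^{*-1}-q^{2i-d}I)U_i\subseteq U_{i+1}$; $[0^*D]$: $K^*U_i\subseteq U_{i-1}+\cdots+U_d$ and $K^{*-1}U_i\subseteq U_0+\cdots+U_{i+1}$; $[0^*0]$: $(K^*-q^{2i-d}I)U_i\subseteq U_{i+1}+\cdots+U_d$ and $(K^{*-1}-q^{d-2i}I)U_i\subseteq U_{i+1}$; $[D^*0]$: $(K^*-q^{2i-d}I)U_i=0$ and $(K^{*-1}-q^{d-2i}I)U_i=0$; $[D^*D]$: $(K^*-q^{2i-d}I)U_i\subseteq U_{i-1}$ and $(K^{*-1}-q^{d-2i}I)U_i\subseteq U_0+\cdots+U_{i-1}$.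
   Context: $\mathbb K$ is an algebraically closed field, $q\in\mathbb K$ nonzero and not a root of unity, $V$ a nonzero finite-dimensional $\mathbb K$-vector space. A tridiagonal pair on $V$ is an ordered pair $A,A^*$ of linear maps $V\to V$ such that: (i) each of $A,A^*$ is diagonalizable; (ii) there is an ordering $V_0,\dots,V_d$ of the eigenspaces of $A$ with $A^*V_i\subseteq V_{i-1}+V_i+V_{i+1}$ ($V_{-1}=V_{d+1}=0$); (iii) there is an ordering $V^*_0,\dots,V^*_\delta$ of the eigenspaces of $A^*$ with $AV^*_i\subseteq V^*_{i-1}+V^*_i+V^*_{i+1}$ ($V^*_{-1}=V^*_{\delta+1}=0$); (iv) no subspace $W\ne0,V$ satisfies $AW\subseteq W$, $A^*W\subseteq W$. It is known $d=\delta$; orderings as in (ii),(iii) are called standard. Setting: $A,A^*$ is a tridiagonal pair on $V$; $V_0,\dots,V_d$ (resp. $V^*_0,\dots,V^*_d$) is a standard ordering of the eigenspaces of $A$ (resp. $A^*$); the eigenvalue of $A$ on $V_i$ is $aq^{2i-d}$ and that of $A^*$ on $V^*_i$ is $a^*q^{d-2i}$ for some nonzero $a,a^*\in\mathbb K$. The six decompositions of $V$ (sequences of nonzero subspaces whose sum is direct and equals $V$) are, for $0\le i\le d$: $[0D]$: $U_i=V_i$; $[0^*D^*]$: $U_i=V^*_i$; $[0^*D]$: $U_i=(V^*_0+\cdots+V^*_i)\cap(V_i+\cdots+V_d)$; $[0^*0]$: $U_i=(V^*_0+\cdots+V^*_i)\cap(V_0+\cdots+V_{d-i})$; $[D^*0]$: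 $U_i=(V^*_{d-i}+\cdots+V^*_d)\cap(V_0+\cdots+V_{d-i})$; $[D^*D]$: $U_i=(V^*_{d-i}+\cdots+V^*_d)\cap(V_i+\cdots+V_d)$. $K^*:V\to V$ is the linear map acting as $q^{2i-d}I$ on the $i$th subspace of $[D^*0]$ for each $i$. *)

theory Defs
  imports "HOL-Computational_Algebra.Polynomial"
begin

text \<open>Vector spaces are given as a type 'v with a scalar multiplication
  s :: 'k \<Rightarrow> 'v \<Rightarrow> 'v satisfying the library locale vector_space.\<close>

definition alg_closed_field :: "'k::field itself \<Rightarrow> bool" where
  "alg_closed_field _ \<longleftrightarrow> (\<forall>p::'k poly. degree p > 0 \<longrightarrow> (\<exists>x. poly p x = 0))"

definition fin_dim :: "('k::field \<Rightarrow> 'v::ab_group_add \<Rightarrow> 'v) \<Rightarrow> bool" where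
  "fin_dim s \<longleftrightarrow> (\<exists>B. finite B \<and> module.span s B = UNIV)"

definition eigenspace :: "('k::field \<Rightarrow> 'v::ab_group_add \<Rightarrow> 'v) \<Rightarrow> ('v \<Rightarrow> 'v) \<Rightarrow> 'k \<Rightarrow> 'v set" where
  "eigenspace s A c = {v. A v = s c v}"

definition is_eigenvalue :: "('k::field \<Rightarrow> 'v::ab_group_add \<Rightarrow> 'v) \<Rightarrow> ('v \<Rightarrow> 'v) \<Rightarrow> 'k \<Rightarrow> bool" where
  "is_eigenvalue s A c \<longleftrightarrow> eigenspace s A c \<noteq> {0}"

definition diagonalizable :: "('k::field \<Rightarrow> 'v::ab_group_add \<Rightarrow> 'v) \<Rightarrow> ('v \<Rightarrow> 'v) \<Rightarrow> bool" where
  "diagonalizable s A \<longleftrightarrow> module.span s (\<Union>c. eigenspace s A c) = UNIV"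

definition ssum :: "('k::field \<Rightarrow> 'v::ab_group_add \<Rightarrow> 'v) \<Rightarrow> ('i \<Rightarrow> 'v set) \<Rightarrow> 'i set \<Rightarrow> 'v set" where
  "ssum s S I = module.span s (\<Union>i\<in>I. S i)"

definition standard_ordering ::
  "('k::field \<Rightarrow> 'v::ab_group_add \<Rightarrow> 'v) \<Rightarrow> ('v \<Rightarrow> 'v) \<Rightarrow> ('v \<Rightarrow> 'v) \<Rightarrow> (nat \<Rightarrow> 'v set) \<Rightarrow> nat \<Rightarrow> bool" where
  "standard_ordering s A B Vs d \<longleftrightarrow>
     bij_betw Vs {..d} {eigenspace s A c | c. is_eigenvalue s A c} \<and>
     (\<forall>i\<le>d. B ` Vs i \<subseteq> ssum s Vs ({i - 1, i, i + 1} \<inter> {..d}))"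

definition TD_pair :: "('k::field \<Rightarrow> 'v::ab_group_add \<Rightarrow> 'v) \<Rightarrow> ('v \<Rightarrow> 'v) \<Rightarrow> ('v \<Rightarrow> 'v) \<Rightarrow> bool" where
  "TD_pair s A B \<longleftrightarrow>
     Vector_Spaces.linear s s A \<and> Vector_Spaces.linear s s B \<and>
     diagonalizable s A \<and> diagonalizable s B \<and>
     (\<exists>Vs d. standard_ordering s A B Vs d) \<and>
     (\<exists>Vs d. standard_ordering s B A Vs d) \<and>
     (\<forall>W. module.subspace s W \<and> A ` W \<subseteq> W \<and> B ` W \<subseteq> W \<longrightarrow> W = {0} \<or> W = UNIV)"

definition ext_idx :: "(nat \<Rightarrow> 'v::zero set) \<Rightarrow> nat \<Rightarrow> int \<Rightarrow> 'v set" where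
  "ext_idx U d j = (if 0 \<le> j \<and> j \<le> int d then U (nat j) else {0})"

text \<open>The six decompositions (Vs = eigenspaces of A, Vss = eigenspaces of A*).\<close>
definition dec_0D :: "(nat \<Rightarrow> 'v set) \<Rightarrow> (nat \<Rightarrow> 'v set) \<Rightarrow> nat \<Rightarrow> nat \<Rightarrow> 'v set" where
  "dec_0D Vs Vss d i = Vs i"
definition dec_0sDs :: "(nat \<Rightarrow> 'v set) \<Rightarrow> (nat \<Rightarrow> 'v set) \<Rightarrow> nat \<Rightarrow> nat \<Rightarrow> 'v set" where
  "dec_0sDs Vs Vss d i = Vss i"
definition dec_0sD :: "('k::field \<Rightarrow> 'v::ab_group_add \<Rightarrow> 'v) \<Rightarrow> (nat \<Rightarrow> 'v set) \<Rightarrow> (nat \<Rightarrow> 'v set) \<Rightarrow> nat \<Rightarrow> nat \<Rightarrow> 'v set" where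
  "dec_0sD s Vs Vss d i = ssum s Vss {0..i} \<inter> ssum s Vs {i..d}"
definition dec_0s0 :: "('k::field \<Rightarrow> 'v::ab_group_add \<Rightarrow> 'v) \<Rightarrow> (nat \<Rightarrow> 'v set) \<Rightarrow> (nat \<Rightarrow> 'v set) \<Rightarrow> nat \<Rightarrow> nat \<Rightarrow> 'v set" where
  "dec_0s0 s Vs Vss d i = ssum s Vss {0..i} \<inter> ssum s Vs {0..d - i}"
definition dec_Ds0 :: "('k::field \<Rightarrow> 'v::ab_group_add \<Rightarrow> 'v) \<Rightarrow> (nat \<Rightarrow> 'v set) \<Rightarrow> (nat \<Rightarrow> 'v set) \<Rightarrow> nat \<Rightarrow> nat \<Rightarrow> 'v set" where
  "dec_Ds0 s Vs Vss d i = ssum s Vss {d - i..d} \<inter> ssum s Vs {0..d - i}"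
definition dec_DsD :: "('k::field \<Rightarrow> 'v::ab_group_add \<Rightarrow> 'v) \<Rightarrow> (nat \<Rightarrow> 'v set) \<Rightarrow> (nat \<Rightarrow> 'v set) \<Rightarrow> nat \<Rightarrow> nat \<Rightarrow> 'v set" where
  "dec_DsD s Vs Vss d i = ssum s Vss {d - i..d} \<inter> ssum s Vs {i..d}"

definition shift_img :: "('k::field \<Rightarrow> 'v::ab_group_add \<Rightarrow> 'v) \<Rightarrow> ('v \<Rightarrow> 'v) \<Rightarrow> 'k \<Rightarrow> 'v set \<Rightarrow> 'v set" where
  "shift_img s K c U = (\<lambda>v. K v - s c v) ` U"

end

theory Submission
  imports Defs
begin


context vector_space
begin

lemma ssum_subspace[simp]: "subspace (ssum scale S I)"
  by (simp add: ssum_def)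

lemma ssum_mono: "I \<subseteq> J \<Longrightarrow> ssum scale S I \<subseteq> ssum scale S J"
  unfolding ssum_def by (rule span_mono) auto

lemma ssum_ge: "i \<in> I \<Longrightarrow> x \<in> S i \<Longrightarrow> x \<in> ssum scale S I"
  unfolding ssum_def by (rule span_base) auto

lemma ssum_le: "(\<And>i. i \<in> I \<Longrightarrow> S i \<subseteq> T) \<Longrightarrow> subspace T \<Longrightarrow> ssum scale S I \<subseteq> T"
  unfolding ssum_def by (rule span_minimal) auto

lemma ssum_empty[simp]: "ssum scale S {} = {0}"
  by (simp add: ssum_def)

lemma lin_props:
  assumes "Vector_Spaces.linear scale scale f"
  shows "f (x + y) = f x + f y" "f (c *s x) = c *s f x" "f 0 = 0" "f (x - y) = f x - f y" "f (- x) = - f x"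
proof -
  interpret module_hom scale scale f using assms by (simp add: linear_iff_module_hom)
  show "f (x + y) = f x + f y" "f (c *s x) = c *s f x" "f 0 = 0" "f (x - y) = f x - f y" "f (- x) = - f x"
    by (simp_all add: add scale diff neg)
qed

lemma lin_shift: "Vector_Spaces.linear scale scale f \<Longrightarrow> Vector_Spaces.linear scale scale (\<lambda>v. f v - c *s v)"
proof -
  assume l: "Vector_Spaces.linear scale scale f"
  show ?thesis unfolding Vector_Spaces.linear_iff
    using vector_space_axioms
    by (simp add: lin_props[OF l] algebra_simps scale_right_diff_distrib)
qed

lemma lin_into:
  assumes "Vector_Spaces.linear scale scale f" "\<And>x. x \<in> S \<Longrightarrow> f x \<in> T" "subspace T"
  shows "f ` span S \<subseteq> T"
proof -
  interpret module_hom scale scale f using assms by (simp add: linear_iff_module_hom)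
  have "f ` span S = span (f ` S)" by (simp add: span_image)
  also have "\<dots> \<subseteq> T" using assms by (intro span_minimal) auto
  finally show ?thesis .
qed

lemma lin_ssum:
  assumes "Vector_Spaces.linear scale scale f" "\<And>i x. i \<in> I \<Longrightarrow> x \<in> S i \<Longrightarrow> f x \<in> T" "subspace T"
  shows "f ` ssum scale S I \<subseteq> T"
  unfolding ssum_def using assms by (intro lin_into) auto

lemma ssum_split: "ssum scale S (I \<union> J) = {x + y | x y. x \<in> ssum scale S I \<and> y \<in> ssum scale S J}"
  unfolding ssum_def by (simp add: image_Un span_Un)

lemma eigenspace_subspace: "Vector_Spaces.linear scale scale A \<Longrightarrow> subspace (eigenspace scale A c)"
  unfolding subspace_def eigenspace_def by (auto simp: lin_props scale_right_distrib)

lemma eigen_zero: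
  assumes lin: "Vector_Spaces.linear scale scale A" and fin: "finite I"
    and eig: "\<And>j x. j \<in> I \<Longrightarrow> x \<in> S j \<Longrightarrow> A x = f j *s x"
    and c: "c \<notin> f ` I"
  shows "v \<in> ssum scale S I \<Longrightarrow> A v = c *s v \<Longrightarrow> v = 0"
  using fin eig c
proof (induction I arbitrary: v rule: finite_induct)
  case empty then show ?case by simp
next
  case (insert k I)
  have "ssum scale S (insert k I) = ssum scale S ({k} \<union> I)" by simp
  then obtain x y where xy: "x \<in> ssum scale S {k}" "y \<in> ssum scale S I" "v = x + y"
    using insert.prems(1) ssum_split by blast
  have ek: "subspace (eigenspace scale A (f k))" by (rule eigenspace_subspace[OF lin])
  have "ssum scale S {k} \<subseteq> eigenspace scale A (f k)"
    by (rule ssum_le[OF _ ek]) (auto simp: eigenspace_def insert.prems)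
  with xy have Ax: "A x = f k *s x" by (auto simp: eigenspace_def)
  have inv: "(\<lambda>v. A v - f k *s v) ` ssum scale S I \<subseteq> ssum scale S I"
  proof (rule lin_ssum[OF lin_shift[OF lin]])
    fix i x assume ix: "i \<in> I" "x \<in> S i"
    then have "A x - f k *s x = (f i - f k) *s x" using insert.prems by (simp add: algebra_simps)
    also have "\<dots> \<in> ssum scale S I" using ix by (intro subspace_scale[OF ssum_subspace] ssum_ge)
    finally show "A x - f k *s x \<in> ssum scale S I" .
  qed simp
  have "A v - f k *s v = A y - f k *s y" using xy Ax by (simp add: lin_props[OF lin] algebra_simps)
  also have "\<dots> \<in> ssum scale S I" using inv xy by auto
  finally have m: "A v - f k *s v \<in> ssum scale S I" .
  have "A v - f k *s v = (c - f k) *s v" using insert.prems by (simp add: algebra_simps)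
  with m have m2: "(c - f k) *s v \<in> ssum scale S I" by simp
  have "A ((c - f k) *s v) = c *s ((c - f k) *s v)"
    using insert.prems by (simp add: lin_props[OF lin] mult.commute)
  then have "(c - f k) *s v = 0"
    using insert.IH[OF m2] insert.prems by auto
  moreover have "c \<noteq> f k" using insert.prems by auto
  ultimately show ?case by simp
qed

end


locale tdd = vector_space s for s :: "'k::field \<Rightarrow> 'v::ab_group_add \<Rightarrow> 'v" (infixr \<open>*s\<close> 75) +
  fixes A B :: "'v \<Rightarrow> 'v" and X Y :: "nat \<Rightarrow> 'v set" and d :: nat and th ths :: "nat \<Rightarrow> 'k"
  assumes linA: "Vector_Spaces.linear s s A" and linB: "Vector_Spaces.linear s s B"
    and Xeig: "\<And>j. j \<le> d \<Longrightarrow> X j = eigenspace s A (th j)"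
    and Yeig: "\<And>j. j \<le> d \<Longrightarrow> Y j = eigenspace s B (ths j)"
    and Xz: "\<And>j. d < j \<Longrightarrow> X j = {0}"
    and Yz: "\<And>j. d < j \<Longrightarrow> Y j = {0}"
    and thinj: "inj_on th {..d}" and thsinj: "inj_on ths {..d}"
    and Xne: "\<And>j. j \<le> d \<Longrightarrow> X j \<noteq> {0}"
    and Yne: "\<And>j. j \<le> d \<Longrightarrow> Y j \<noteq> {0}"
    and Xspan: "ssum s X UNIV = UNIV"
    and Btri: "\<And>j. B ` X j \<subseteq> ssum s X {k. j \<le> k + 1 \<and> k \<le> j + 1}"
    and Atri: "\<And>j. A ` Y j \<subseteq> ssum s Y {k. j \<le> k + 1 \<and> k \<le> j + 1}"
    and irr: "\<And>W. subspace W \<Longrightarrow> A ` W \<subseteq> W \<Longrightarrow> B ` W \<subseteq> W \<Longrightarrow> W = {0} \<or> W = UNIV"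
begin

definition "P i = ssum s Y {..<i}"
definition "Q i = ssum s X {i..}"
definition "U i = P (Suc i) \<inter> Q i"
definition "W i = P (Suc i) \<inter> Q (Suc i)"

lemma Xsub: "subspace (X j)"
  by (cases "j \<le> d") (auto simp: Xeig Xz eigenspace_subspace linA)
lemma Ysub: "subspace (Y j)"
  by (cases "j \<le> d") (auto simp: Yeig Yz eigenspace_subspace linB)

lemma Xev: "x \<in> X j \<Longrightarrow> A x = th j *s x"
  by (cases "j \<le> d") (auto simp: Xeig Xz eigenspace_def lin_props[OF linA])
lemma Yev: "y \<in> Y j \<Longrightarrow> B y = ths j *s y"
  by (cases "j \<le> d") (auto simp: Yeig Yz eigenspace_def lin_props[OF linB])

lemma Psub[simp]: "subspace (P i)" and Qsub[simp]: "subspace (Q i)"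
  by (simp_all add: P_def Q_def)
lemma Usub[simp]: "subspace (U i)" and Wsub[simp]: "subspace (W i)"
  by (simp_all add: U_def W_def subspace_inter)

lemma P_mono: "i \<le> j \<Longrightarrow> P i \<subseteq> P j"
  unfolding P_def by (rule ssum_mono) auto
lemma Q_mono: "i \<le> j \<Longrightarrow> Q j \<subseteq> Q i"
  unfolding Q_def by (rule ssum_mono) auto
lemma P0[simp]: "P 0 = {0}" by (simp add: P_def)
lemma Q0[simp]: "Q 0 = UNIV" using Xspan by (simp add: Q_def)

lemma Q_A: "(\<lambda>v. A v - th i *s v) ` Q i \<subseteq> Q (Suc i)"
  unfolding Q_def
proof (rule lin_ssum[OF lin_shift[OF linA]])
  fix j x assume jx: "j \<in> {i..}" "x \<in> X j"
  then have e: "A x - th i *s x = (th j - th i) *s x" by (simp add: Xev algebra_simps)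
  show "A x - th i *s x \<in> ssum s X {Suc i..}"
  proof (cases "j = i")
    case True then show ?thesis using e by (simp add: span_zero ssum_def)
  next
    case False
    then have "j \<in> {Suc i..}" using jx by auto
    then have "x \<in> ssum s X {Suc i..}" using jx by (intro ssum_ge)
    then show ?thesis using e by (simp add: subspace_scale[OF ssum_subspace])
  qed
qed simp

lemma Q_B: "B ` Q (Suc i) \<subseteq> Q i"
  unfolding Q_def
proof (rule lin_ssum[OF linB])
  fix j x assume jx: "j \<in> {Suc i..}" "x \<in> X j"
  then have "B x \<in> ssum s X {k. j \<le> k + 1 \<and> k \<le> j + 1}" using Btri by auto
  also have "\<dots> \<subseteq> ssum s X {i..}" using jx by (intro ssum_mono) auto
  finally show "B x \<in> ssum s X {i..}" .
qed simp

lemma P_A: "A ` P i \<subseteq> P (Suc i)"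
  unfolding P_def
proof (rule lin_ssum[OF linA])
  fix j x assume jx: "j \<in> {..<i}" "x \<in> Y j"
  then have "A x \<in> ssum s Y {k. j \<le> k + 1 \<and> k \<le> j + 1}" using Atri by auto
  also have "\<dots> \<subseteq> ssum s Y {..<Suc i}" using jx by (intro ssum_mono) auto
  finally show "A x \<in> ssum s Y {..<Suc i}" .
qed simp

lemma P_B: "(\<lambda>v. B v - ths i *s v) ` P (Suc i) \<subseteq> P i"
  unfolding P_def
proof (rule lin_ssum[OF lin_shift[OF linB]])
  fix j x assume jx: "j \<in> {..<Suc i}" "x \<in> Y j"
  then have e: "B x - ths i *s x = (ths j - ths i) *s x" by (simp add: Yev algebra_simps)
  show "B x - ths i *s x \<in> ssum s Y {..<i}"
  proof (cases "j = i")
    case True then show ?thesis using e by (simp add: span_zero ssum_def)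
  next
    case False
    then have "j \<in> {..<i}" using jx by auto
    then have "x \<in> ssum s Y {..<i}" using jx by (intro ssum_ge)
    then show ?thesis using e by (simp add: subspace_scale[OF ssum_subspace])
  qed
qed simp

lemma A_split: "A w = th i *s w + (A w - th i *s w)" by simp
lemma B_split: "B w = ths i *s w + (B w - ths i *s w)" by simp

lemma U_A: "u \<in> U i \<Longrightarrow> A u - th i *s u \<in> U (Suc i)"
proof -
  assume u: "u \<in> U i"
  have "A u - th i *s u \<in> Q (Suc i)" using Q_A u by (auto simp: U_def)
  moreover have "A u \<in> P (Suc (Suc i))" using P_A u by (auto simp: U_def)
  moreover have "u \<in> P (Suc (Suc i))" using P_mono[of "Suc i" "Suc (Suc i)"] u by (auto simp: U_def)
  ultimately show ?thesis unfolding U_def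
    by (auto intro: subspace_diff[OF Psub] subspace_scale[OF Psub])
qed

lemma U_B0: "u \<in> U 0 \<Longrightarrow> B u - ths 0 *s u = 0"
  using P_B[of 0] by (auto simp: U_def)

lemma U_B: "u \<in> U (Suc m) \<Longrightarrow> B u - ths (Suc m) *s u \<in> U m"
proof -
  assume u: "u \<in> U (Suc m)"
  have "B u - ths (Suc m) *s u \<in> P (Suc m)" using P_B u by (auto simp: U_def)
  moreover have "B u \<in> Q m" using Q_B u by (auto simp: U_def)
  moreover have "u \<in> Q m" using Q_mono[of m "Suc m"] u by (auto simp: U_def)
  ultimately show ?thesis unfolding U_def
    by (auto intro: subspace_diff[OF Qsub] subspace_scale[OF Qsub])
qed

lemma W_A: "w \<in> W i \<Longrightarrow> A w - th (Suc i) *s w \<in> W (Suc i)"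
proof -
  assume u: "w \<in> W i"
  have "A w - th (Suc i) *s w \<in> Q (Suc (Suc i))" using Q_A u by (auto simp: W_def)
  moreover have "A w \<in> P (Suc (Suc i))" using P_A u by (auto simp: W_def)
  moreover have "w \<in> P (Suc (Suc i))" using P_mono[of "Suc i" "Suc (Suc i)"] u by (auto simp: W_def)
  ultimately show ?thesis unfolding W_def
    by (auto intro: subspace_diff[OF Psub] subspace_scale[OF Psub])
qed

lemma W_B0: "w \<in> W 0 \<Longrightarrow> B w - ths 0 *s w = 0"
  using P_B[of 0] by (auto simp: W_def)

lemma W_B: "w \<in> W (Suc m) \<Longrightarrow> B w - ths (Suc m) *s w \<in> W m"
proof -
  assume u: "w \<in> W (Suc m)"
  have "B w - ths (Suc m) *s w \<in> P (Suc m)" using P_B u by (auto simp: W_def)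
  moreover have "B w \<in> Q (Suc m)" using Q_B u by (auto simp: W_def)
  moreover have "w \<in> Q (Suc m)" using Q_mono[of "Suc m" "Suc (Suc m)"] u by (auto simp: W_def)
  ultimately show ?thesis unfolding W_def
    by (auto intro: subspace_diff[OF Qsub] subspace_scale[OF Qsub])
qed

lemma ssum_finite: "ssum s X J = ssum s X (J \<inter> {..d})"
proof
  show "ssum s X J \<subseteq> ssum s X (J \<inter> {..d})"
  proof (rule ssum_le)
    fix i assume i: "i \<in> J" show "X i \<subseteq> ssum s X (J \<inter> {..d})"
    proof (cases "i \<le> d")
      case True then show ?thesis using i by (auto intro: ssum_ge)
    next
      case False then show ?thesis by (simp add: Xz subspace_0)
    qed
  qed simp
qed (rule ssum_mono, auto)

lemma Q1: "Q 1 \<noteq> UNIV"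
proof
  assume h: "Q 1 = UNIV"
  obtain x where x: "x \<in> X 0" "x \<noteq> 0" using Xne[of 0] Xsub[of 0] subspace_0 by blast
  have "x \<in> ssum s X ({1..} \<inter> {..d})" using h ssum_finite by (auto simp: Q_def)
  moreover have "th 0 \<notin> th ` ({1..} \<inter> {..d})" using thinj by (auto simp: inj_on_def)
  ultimately have "x = 0"
    using eigen_zero[OF linA, of "{1..} \<inter> {..d}" X th "th 0" x] Xev x by auto
  with x show False by simp
qed

lemma W_zero: "W i = {0}"
proof -
  define WW where "WW = ssum s W UNIV"
  have sWW: "subspace WW" by (simp add: WW_def)
  have inW: "w \<in> W i \<Longrightarrow> w \<in> WW" for w i unfolding WW_def by (rule ssum_ge) auto
  have "A ` WW \<subseteq> WW" unfolding WW_def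
  proof (rule lin_ssum[OF linA])
    fix i w assume "w \<in> W i"
    then show "A w \<in> ssum s W UNIV"
      using W_A[of w i] A_split[of w "Suc i"] inW[unfolded WW_def]
      by (metis subspace_add subspace_scale ssum_subspace)
  qed simp
  moreover have "B ` WW \<subseteq> WW" unfolding WW_def
  proof (rule lin_ssum[OF linB])
    fix i w assume w: "w \<in> W i"
    have "B w - ths i *s w \<in> ssum s W UNIV"
    proof (cases i)
      case 0 then show ?thesis using W_B0 w by (simp add: subspace_0)
    next
      case (Suc m) then show ?thesis using W_B w inW[unfolded WW_def] by auto
    qed
    then show "B w \<in> ssum s W UNIV"
      using B_split[of w i] inW[unfolded WW_def] w
      by (metis subspace_add subspace_scale ssum_subspace)
  qed simp
  moreover have "WW \<subseteq> Q 1" unfolding WW_def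
  proof (rule ssum_le)
    fix i show "W i \<subseteq> Q 1" using Q_mono[of 1 "Suc i"] by (auto simp: W_def)
  qed simp
  ultimately have "WW = {0}" using irr[OF sWW] Q1 by auto
  then show ?thesis using inW[of _ i] subspace_0[OF Wsub[of i]] by auto
qed

lemma UU: "ssum s U UNIV = UNIV"
proof -
  define UU where "UU = ssum s U UNIV"
  have sUU: "subspace UU" by (simp add: UU_def)
  have inU: "w \<in> U i \<Longrightarrow> w \<in> UU" for w i unfolding UU_def by (rule ssum_ge) auto
  have "A ` UU \<subseteq> UU" unfolding UU_def
  proof (rule lin_ssum[OF linA])
    fix i w assume "w \<in> U i"
    then show "A w \<in> ssum s U UNIV"
      using U_A[of w i] A_split[of w i] inU[unfolded UU_def]
      by (metis subspace_add subspace_scale ssum_subspace)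
  qed simp
  moreover have "B ` UU \<subseteq> UU" unfolding UU_def
  proof (rule lin_ssum[OF linB])
    fix i w assume w: "w \<in> U i"
    have "B w - ths i *s w \<in> ssum s U UNIV"
    proof (cases i)
      case 0 then show ?thesis using U_B0 w by (simp add: subspace_0)
    next
      case (Suc m) then show ?thesis using U_B w inU[unfolded UU_def] by auto
    qed
    then show "B w \<in> ssum s U UNIV"
      using B_split[of w i] inU[unfolded UU_def] w
      by (metis subspace_add subspace_scale ssum_subspace)
  qed simp
  moreover have "UU \<noteq> {0}"
  proof -
    obtain y where y: "y \<in> Y 0" "y \<noteq> 0" using Yne[of 0] Ysub[of 0] subspace_0 by blast
    have "y \<in> P 1" unfolding P_def using y by (intro ssum_ge) auto
    then have "y \<in> U 0" by (simp add: U_def)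
    then show ?thesis using inU y by auto
  qed
  ultimately show ?thesis using irr[OF sUU] by (auto simp: UU_def)
qed

lemma R1: "ssum s Y {..i} \<inter> ssum s X {Suc i..} = {0}"
  using W_zero[of i] by (simp add: W_def P_def Q_def lessThan_Suc_atMost)

lemma U_le_P: "ssum s U {..i} \<subseteq> P (Suc i)"
proof (rule ssum_le)
  fix j assume "j \<in> {..i}" then show "U j \<subseteq> P (Suc i)" using P_mono[of "Suc j" "Suc i"] by (auto simp: U_def)
qed simp

lemma U_le_Q: "ssum s U {i..} \<subseteq> Q i"
proof (rule ssum_le)
  fix j assume "j \<in> {i..}" then show "U j \<subseteq> Q i" using Q_mono[of i j] by (auto simp: U_def)
qed simp

lemma R2a: "ssum s U {..i} = ssum s Y {..i}"
proof -
  have "ssum s U {..i} = P (Suc i)"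
  proof
    show "P (Suc i) \<subseteq> ssum s U {..i}"
    proof
      fix v assume v: "v \<in> P (Suc i)"
      have "{..i} \<union> {Suc i..} = UNIV" by auto
      then have "v \<in> ssum s U ({..i} \<union> {Suc i..})" using UU by simp
      then obtain x y where xy: "x \<in> ssum s U {..i}" "y \<in> ssum s U {Suc i..}" "v = x + y"
        using ssum_split by blast
      have "y \<in> Q (Suc i)" using xy U_le_Q by auto
      moreover have "y = v - x" using xy by simp
      then have "y \<in> P (Suc i)" using v xy U_le_P subspace_diff[OF Psub] by blast
      ultimately have "y \<in> W i" by (simp add: W_def)
      then show "v \<in> ssum s U {..i}" using W_zero xy by simp
    qed
  qed (rule U_le_P)
  then show ?thesis by (simp add: P_def lessThan_Suc_atMost)
qed

lemma R2a': "ssum s U {..<i} = ssum s Y {..<i}"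
  by (cases i) (simp_all add: lessThan_Suc_atMost R2a)

lemma R2b: "ssum s U {i..} = ssum s X {i..}"
proof -
  have "ssum s U {i..} = Q i"
  proof
    show "Q i \<subseteq> ssum s U {i..}"
    proof
      fix v assume v: "v \<in> Q i"
      have "{..<i} \<union> {i..} = UNIV" by auto
      then have "v \<in> ssum s U ({..<i} \<union> {i..})" using UU by simp
      then obtain x y where xy: "x \<in> ssum s U {..<i}" "y \<in> ssum s U {i..}" "v = x + y"
        using ssum_split by blast
      have "x = 0"
      proof (cases i)
        case 0 then show ?thesis using xy by simp
      next
        case (Suc m)
        have "x \<in> P (Suc m)" using xy U_le_P[of m] Suc by (auto simp: lessThan_Suc_atMost)
        moreover have "x = v - y" using xy by simp
        then have "x \<in> Q (Suc m)" using v xy U_le_Q Suc subspace_diff[OF Qsub] by blast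
        ultimately have "x \<in> W m" by (simp add: W_def)
        then show ?thesis using W_zero by simp
      qed
      then show "v \<in> ssum s U {i..}" using xy by simp
    qed
  qed (rule U_le_Q)
  then show ?thesis by (simp add: Q_def)
qed

lemma U_big: "d < i \<Longrightarrow> U i = {0}"
proof -
  assume "d < i"
  then have "{i..} \<inter> {..d} = {}" by auto
  then have "Q i = ssum s X {}" unfolding Q_def using ssum_finite[of "{i..}"] by simp
  then show ?thesis using subspace_0[OF Psub] by (auto simp: U_def)
qed

lemma U_eq: "U i = ssum s Y {..i} \<inter> ssum s X {i..}"
  by (simp add: U_def P_def Q_def lessThan_Suc_atMost)

end


definition pad :: "(nat \<Rightarrow> 'v set) \<Rightarrow> (nat \<Rightarrow> nat) \<Rightarrow> nat \<Rightarrow> nat \<Rightarrow> 'v::zero set" where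
  "pad S f d j = (if j \<le> d then S (f j) else {0})"

lemma (in vector_space) pad_ssum: "ssum scale (pad S f d) J = ssum scale S (f ` (J \<inter> {..d}))"
  unfolding ssum_def span_eq
proof
  show "\<Union> (pad S f d ` J) \<subseteq> span (\<Union> (S ` f ` (J \<inter> {..d})))"
  proof
    fix x assume "x \<in> \<Union> (pad S f d ` J)"
    then obtain j where j: "j \<in> J" "x \<in> pad S f d j" by auto
    show "x \<in> span (\<Union> (S ` f ` (J \<inter> {..d})))"
    proof (cases "j \<le> d")
      case True then show ?thesis using j by (intro span_base) (auto simp: pad_def)
    next
      case False then show ?thesis using j by (simp add: pad_def span_zero)
    qed
  qed
  show "\<Union> (S ` f ` (J \<inter> {..d})) \<subseteq> span (\<Union> (pad S f d ` J))"
  proof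
    fix x assume "x \<in> \<Union> (S ` f ` (J \<inter> {..d}))"
    then obtain j where j: "j \<in> J" "j \<le> d" "x \<in> S (f j)" by auto
    then have "x \<in> pad S f d j" by (simp add: pad_def)
    then show "x \<in> span (\<Union> (pad S f d ` J))" using j by (intro span_base) auto
  qed
qed

lemma good_f:
  fixes f :: "nat \<Rightarrow> nat" and d :: nat
  assumes "f = id \<or> f = (\<lambda>j. d - j)"
  shows "\<And>j. j \<le> d \<Longrightarrow> f j \<le> d" "f ` {..d} = {..d}" "inj_on f {..d}"
    "\<And>j. j \<le> d \<Longrightarrow> {f j - 1, f j, f j + 1} \<inter> {..d} \<subseteq> f ` ({k. j \<le> k + 1 \<and> k \<le> j + 1} \<inter> {..d})"
  using assms
proof -
  show "\<And>j. j \<le> d \<Longrightarrow> f j \<le> d" using assms by (elim disjE) auto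
  show "inj_on f {..d}" using assms by (auto simp: inj_on_def)
  show "f ` {..d} = {..d}"
  proof (cases "f = id")
    case True then show ?thesis by simp
  next
    case False then have f: "f = (\<lambda>j. d - j)" using assms by simp
    show ?thesis unfolding f
    proof
      show "{..d} \<subseteq> (\<lambda>j. d - j) ` {..d}"
      proof
        fix m assume "m \<in> {..d}" then show "m \<in> (\<lambda>j. d - j) ` {..d}"
          by (intro image_eqI[of _ _ "d - m"]) auto
      qed
    qed auto
  qed
  fix j assume j: "j \<le> d"
  show "{f j - 1, f j, f j + 1} \<inter> {..d} \<subseteq> f ` ({k. j \<le> k + 1 \<and> k \<le> j + 1} \<inter> {..d})"
  proof (cases "f = id")
    case True then show ?thesis by auto
  next
    case False then have f: "f = (\<lambda>j. d - j)" using assms by simp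
    show ?thesis unfolding f
    proof
      fix m assume m: "m \<in> {d - j - 1, d - j, d - j + 1} \<inter> {..d}"
      show "m \<in> (\<lambda>j. d - j) ` ({k. j \<le> k + 1 \<and> k \<le> j + 1} \<inter> {..d})"
        by (rule image_eqI[of _ _ "d - m"]) (use m j in auto)
    qed
  qed
qed

lemma td_split:
  fixes s :: "'k::field \<Rightarrow> 'v::ab_group_add \<Rightarrow> 'v"
  assumes vs: "vector_space s"
    and linA: "Vector_Spaces.linear s s A" and linB: "Vector_Spaces.linear s s B"
    and Seig: "\<forall>j\<le>d. S j = eigenspace s A (th j)"
    and Teig: "\<forall>j\<le>d. T j = eigenspace s B (ths j)"
    and thinj: "inj_on th {..d}" and thsinj: "inj_on ths {..d}"
    and Sne: "\<forall>j\<le>d. S j \<noteq> {0}" and Tne: "\<forall>j\<le>d. T j \<noteq> {0}"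
    and Sspan: "ssum s S {..d} = UNIV"
    and Stri: "\<forall>j\<le>d. B ` S j \<subseteq> ssum s S ({j - 1, j, j + 1} \<inter> {..d})"
    and Ttri: "\<forall>j\<le>d. A ` T j \<subseteq> ssum s T ({j - 1, j, j + 1} \<inter> {..d})"
    and irr: "\<forall>W. module.subspace s W \<and> A ` W \<subseteq> W \<and> B ` W \<subseteq> W \<longrightarrow> W = {0} \<or> W = UNIV"
    and ff: "f = id \<or> f = (\<lambda>j. d - j)" and gg: "g = id \<or> g = (\<lambda>j. d - j)"
    and Uf_def: "Uf = (\<lambda>i. ssum s T (g ` ({..i} \<inter> {..d})) \<inter> ssum s S (f ` ({i..} \<inter> {..d})))"
  shows "\<forall>i. ssum s Uf {..i} = ssum s T (g ` ({..i} \<inter> {..d}))"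
    "\<forall>i. ssum s Uf {..<i} = ssum s T (g ` ({..<i} \<inter> {..d}))"
    "\<forall>i. ssum s Uf {i..} = ssum s S (f ` ({i..} \<inter> {..d}))"
    "\<forall>i. ssum s T (g ` ({..i} \<inter> {..d})) \<inter> ssum s S (f ` ({Suc i..} \<inter> {..d})) = {0}"
    "\<forall>i u. u \<in> Uf i \<longrightarrow> A u - s (th (f i)) u \<in> Uf (Suc i)"
    "\<forall>u. u \<in> Uf 0 \<longrightarrow> B u - s (ths (g 0)) u = 0"
    "\<forall>m u. u \<in> Uf (Suc m) \<longrightarrow> B u - s (ths (g (Suc m))) u \<in> Uf m"
    "\<forall>i. d < i \<longrightarrow> Uf i = {0}"
    "\<forall>i. module.subspace s (Uf i)"
proof -
  interpret vector_space s by (rule vs)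
  note F = good_f[OF ff] and G = good_f[OF gg]
  have tri: "B' ` pad S' h d j \<subseteq> ssum s (pad S' h d) {k. j \<le> k + 1 \<and> k \<le> j + 1}"
    if h: "h = id \<or> h = (\<lambda>j. d - j)" and lin: "Vector_Spaces.linear s s B'"
      and tr: "\<forall>j\<le>d. B' ` S' j \<subseteq> ssum s S' ({j - 1, j, j + 1} \<inter> {..d})" for h B' S' j
  proof (cases "j \<le> d")
    case True
    have "B' ` S' (h j) \<subseteq> ssum s S' ({h j - 1, h j, h j + 1} \<inter> {..d})"
      using tr good_f(1)[OF h True] by blast
    also have "\<dots> \<subseteq> ssum s S' (h ` ({k. j \<le> k + 1 \<and> k \<le> j + 1} \<inter> {..d}))"
      by (rule ssum_mono[OF good_f(4)[OF h True]])
    finally show ?thesis using True by (simp add: pad_ssum pad_def)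
  next
    case False then show ?thesis by (simp add: pad_def lin_props[OF lin] subspace_0)
  qed
  interpret T: tdd s A B "pad S f d" "pad T g d" d "th \<circ> f" "ths \<circ> g"
  proof (unfold_locales)
    show "pad S f d j = eigenspace s A ((th \<circ> f) j)" if "j \<le> d" for j
      using that F(1) Seig by (simp add: pad_def)
    show "pad T g d j = eigenspace s B ((ths \<circ> g) j)" if "j \<le> d" for j
      using that G(1) Teig by (simp add: pad_def)
    show "pad S f d j = {0}" "pad T g d j = {0}" if "d < j" for j
      using that by (simp_all add: pad_def)
    show "inj_on (th \<circ> f) {..d}" using F(2,3) thinj by (simp add: comp_inj_on)
    show "inj_on (ths \<circ> g) {..d}" using G(2,3) thsinj by (simp add: comp_inj_on)
    show "pad S f d j \<noteq> {0}" if "j \<le> d" for j using that F(1) Sne by (simp add: pad_def)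
    show "pad T g d j \<noteq> {0}" if "j \<le> d" for j using that G(1) Tne by (simp add: pad_def)
    show "ssum s (pad S f d) UNIV = UNIV" using F(2) Sspan by (simp add: pad_ssum)
    show "B ` pad S f d j \<subseteq> ssum s (pad S f d) {k. j \<le> k + 1 \<and> k \<le> j + 1}" for j
      by (rule tri[OF ff linB Stri])
    show "A ` pad T g d j \<subseteq> ssum s (pad T g d) {k. j \<le> k + 1 \<and> k \<le> j + 1}" for j
      by (rule tri[OF gg linA Ttri])
    show "W = {0} \<or> W = UNIV" if "subspace W" "A ` W \<subseteq> W" "B ` W \<subseteq> W" for W
      using irr that by blast
  qed (simp_all add: lin_props[OF linA] lin_props[OF linB])
  have UE: "Uf = T.U" by (auto simp: fun_eq_iff Uf_def T.U_eq pad_ssum)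
  show "\<forall>i. ssum s Uf {..i} = ssum s T (g ` ({..i} \<inter> {..d}))"
    using T.R2a by (simp add: UE pad_ssum)
  show "\<forall>i. ssum s Uf {..<i} = ssum s T (g ` ({..<i} \<inter> {..d}))"
    using T.R2a' by (simp add: UE pad_ssum)
  show "\<forall>i. ssum s Uf {i..} = ssum s S (f ` ({i..} \<inter> {..d}))"
    using T.R2b by (simp add: UE pad_ssum)
  show "\<forall>i. ssum s T (g ` ({..i} \<inter> {..d})) \<inter> ssum s S (f ` ({Suc i..} \<inter> {..d})) = {0}"
    using T.R1 by (simp add: pad_ssum)
  show "\<forall>i u. u \<in> Uf i \<longrightarrow> A u - s (th (f i)) u \<in> Uf (Suc i)"
    using T.U_A by (simp add: UE)
  show "\<forall>u. u \<in> Uf 0 \<longrightarrow> B u - s (ths (g 0)) u = 0"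
    using T.U_B0 by (simp add: UE)
  show "\<forall>m u. u \<in> Uf (Suc m) \<longrightarrow> B u - s (ths (g (Suc m))) u \<in> Uf m"
    using T.U_B by (simp add: UE)
  show "\<forall>i. d < i \<longrightarrow> Uf i = {0}"
    using T.U_big by (simp add: UE)
  show "\<forall>i. subspace (Uf i)"
    using T.Usub by (simp add: UE)
qed


context vector_space begin

lemma diag_tri:
  assumes lin: "Vector_Spaces.linear scale scale K" and ev: "\<And>j v. v \<in> E j \<Longrightarrow> K v = \<kappa> j *s v"
    and sub: "\<And>j. subspace (E j)"
  shows "(\<lambda>v. K v - \<kappa> m *s v) ` ssum scale E J \<subseteq> ssum scale E (J - {m})"
proof (rule lin_ssum[OF lin_shift[OF lin]])
  fix j x assume jx: "j \<in> J" "x \<in> E j"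
  then have e: "K x - \<kappa> m *s x = (\<kappa> j - \<kappa> m) *s x" by (simp add: ev algebra_simps)
  show "K x - \<kappa> m *s x \<in> ssum scale E (J - {m})"
  proof (cases "j = m")
    case True then show ?thesis using e by (simp add: subspace_0)
  next
    case False
    then have "x \<in> ssum scale E (J - {m})" using jx by (intro ssum_ge) auto
    then show ?thesis using e by (simp add: subspace_scale[OF ssum_subspace])
  qed
qed simp

lemma diag_inv:
  assumes lin: "Vector_Spaces.linear scale scale K" and ev: "\<And>j v. v \<in> E j \<Longrightarrow> K v = \<kappa> j *s v"
    and sub: "\<And>j. subspace (E j)"
  shows "K ` ssum scale E J \<subseteq> ssum scale E J"
proof (rule lin_ssum[OF lin])
  fix j x assume jx: "j \<in> J" "x \<in> E j"
  then show "K x \<in> ssum scale E J" by (simp add: ev subspace_scale[OF ssum_subspace] ssum_ge)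
qed simp

lemma ssum_cong: "(\<And>i. i \<in> J \<Longrightarrow> S i = S' i) \<Longrightarrow> ssum scale S J = ssum scale S' J"
proof -
  assume h: "\<And>i. i \<in> J \<Longrightarrow> S i = S' i"
  have "S ` J = S' ` J" using h by (rule image_cong[OF refl])
  then show ?thesis by (simp add: ssum_def)
qed

lemma ssum_fin:
  fixes E :: "nat \<Rightarrow> 'b set" and d :: nat
  assumes "\<And>j. d < j \<Longrightarrow> E j = {0}"
  shows "ssum scale E J = ssum scale E (J \<inter> {..d})"
proof
  show "ssum scale E J \<subseteq> ssum scale E (J \<inter> {..d})"
  proof (rule ssum_le)
    fix i assume i: "i \<in> J" show "E i \<subseteq> ssum scale E (J \<inter> {..d})"
    proof (cases "i \<le> d")
      case True then show ?thesis using i by (auto intro: ssum_ge)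
    next
      case False then have "E i = {0}" using assms by simp
      then show ?thesis by (simp add: subspace_0)
    qed
  qed simp
qed (rule ssum_mono, auto)

lemma diag_inj:
  fixes E :: "nat \<Rightarrow> 'b set" and d :: nat
  assumes lin: "Vector_Spaces.linear scale scale K" and ev: "\<And>j v. v \<in> E j \<Longrightarrow> K v = \<kappa> j *s v"
    and sub: "\<And>j. subspace (E j)" and nz: "\<And>j. \<kappa> j \<noteq> 0"
    and fin: "\<And>j. d < j \<Longrightarrow> E j = {0}" and sp: "ssum scale E UNIV = UNIV"
  shows "inj K"
proof -
  have "\<forall>v. v \<in> ssum scale E {..<n} \<longrightarrow> K v = 0 \<longrightarrow> v = 0" for n :: nat
  proof (induction n)
    case 0 then show ?case by simp
  next
    case (Suc n)
    show ?case
    proof (intro allI impI)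
      fix v assume v: "v \<in> ssum scale E {..<Suc n}" "K v = 0"
      have st: "{..<Suc n} - {n} = {..<n}" by auto
      have "(\<lambda>v. K v - \<kappa> n *s v) ` ssum scale E {..<Suc n} \<subseteq> ssum scale E {..<n}"
        using diag_tri[where K=K and E=E and \<kappa>=\<kappa> and m=n and J="{..<Suc n}", OF lin ev sub]
        unfolding st .
      then have w: "K v - \<kappa> n *s v \<in> ssum scale E {..<n}" using v(1) by blast
      have "K (K v - \<kappa> n *s v) = 0" using v by (simp add: lin_props[OF lin])
      then have "K v - \<kappa> n *s v = 0" using Suc.IH w by blast
      then show "v = 0" using v nz by simp
    qed
  qed
  moreover have "ssum scale E UNIV = ssum scale E {..<Suc d}"
    using ssum_fin[OF fin, where J=UNIV] by (simp add: lessThan_Suc_atMost)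
  ultimately have z: "\<forall>v. K v = 0 \<longrightarrow> v = 0" using sp by (metis UNIV_I)
  interpret module_hom scale scale K using lin by (simp add: linear_iff_module_hom)
  show ?thesis using z by (simp add: inj_iff_eq_0)
qed

lemma diag_surj:
  assumes lin: "Vector_Spaces.linear scale scale K" and ev: "\<And>j v. v \<in> E j \<Longrightarrow> K v = \<kappa> j *s v"
    and sub: "\<And>j. subspace (E j)" and nz: "\<And>j. \<kappa> j \<noteq> 0"
    and sp: "ssum scale E UNIV = UNIV"
  shows "surj K"
proof -
  interpret module_hom scale scale K using lin by (simp add: linear_iff_module_hom)
  have "subspace (range K)" by (rule subspace_image) simp
  moreover have "E j \<subseteq> range K" for j
  proof
    fix v assume v: "v \<in> E j"
    then have "K (inverse (\<kappa> j) *s v) = v"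
      using nz ev[OF subspace_scale[OF sub v]] by simp
    then show "v \<in> range K" by (metis rangeI)
  qed
  ultimately have "ssum scale E UNIV \<subseteq> range K" by (intro ssum_le)
  then show ?thesis using sp by auto
qed

lemma ext_ssum: "ssum scale (ext_idx U d) J = ssum scale U {n. n \<le> d \<and> int n \<in> J}"
  unfolding ssum_def span_eq
proof
  show "\<Union> (ext_idx U d ` J) \<subseteq> span (\<Union> (U ` {n. n \<le> d \<and> int n \<in> J}))"
  proof
    fix x assume "x \<in> \<Union> (ext_idx U d ` J)"
    then obtain j where j: "j \<in> J" "x \<in> ext_idx U d j" by auto
    show "x \<in> span (\<Union> (U ` {n. n \<le> d \<and> int n \<in> J}))"
    proof (cases "0 \<le> j \<and> j \<le> int d")
      case True
      then have "nat j \<le> d \<and> int (nat j) \<in> J \<and> x \<in> U (nat j)" using j by (auto simp: ext_idx_def)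
      then show ?thesis by (intro span_base) blast
    next
      case False then have "x = 0" using j by (auto simp: ext_idx_def split: if_splits)
      then show ?thesis by (simp add: span_zero)
    qed
  qed
  show "\<Union> (U ` {n. n \<le> d \<and> int n \<in> J}) \<subseteq> span (\<Union> (ext_idx U d ` J))"
  proof
    fix x assume "x \<in> \<Union> (U ` {n. n \<le> d \<and> int n \<in> J})"
    then obtain n where n: "n \<le> d" "int n \<in> J" "x \<in> U n" by auto
    then have "x \<in> ext_idx U d (int n)" by (simp add: ext_idx_def)
    then show "x \<in> span (\<Union> (ext_idx U d ` J))" using n by (intro span_base) auto
  qed
qed

end

lemma ext_i: "i \<le> d \<Longrightarrow> ext_idx U d (int i) = U i"
  by (simp add: ext_idx_def)
lemma ext_im: "i \<le> d \<Longrightarrow> ext_idx U d (int i - 1) = (if i = 0 then {0} else U (i - 1))"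
  by (auto simp: ext_idx_def nat_diff_distrib)
lemma ext_ip: "i \<le> d \<Longrightarrow> ext_idx U d (int i + 1) = (if i = d then {0} else U (Suc i))"
  by (auto simp: ext_idx_def nat_add_distrib)

lemma qpow_inj:
  fixes q :: "'k::field"
  assumes q0: "q \<noteq> 0" and nr: "\<forall>n>0. q ^ n \<noteq> 1" and e: "q powi m = q powi n"
  shows "m = n"
proof (rule ccontr)
  assume "m \<noteq> n"
  then consider "m < n" | "n < m" by linarith
  then show False
  proof cases
    case 1
    have "q powi n = q powi m * q powi (n - m)" using q0 by (simp flip: power_int_add)
    then have "q powi (n - m) = 1" using e q0 by simp
    moreover have "q powi (n - m) = q ^ nat (n - m)" using 1 by (simp add: power_int_def)
    ultimately show False using nr 1 by simp
  next
    case 2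
    have "q powi m = q powi n * q powi (m - n)" using q0 by (simp flip: power_int_add)
    then have "q powi (m - n) = 1" using e q0 by simp
    moreover have "q powi (m - n) = q ^ nat (m - n)" using 2 by (simp add: power_int_def)
    ultimately show False using nr 2 by simp
  qed
qed


lemma rv_atMost: "i \<le> d \<Longrightarrow> (\<lambda>j. d - j) ` ({..i} \<inter> {..d}) = {d - i..(d::nat)}"
proof (rule set_eqI, rule iffI)
  fix m assume "i \<le> d" "m \<in> {d - i..d}" then show "m \<in> (\<lambda>j. d - j) ` ({..i} \<inter> {..d})"
    by (intro image_eqI[of _ _ "d - m"]) auto
qed auto

lemma rv_atLeast: "i \<le> d \<Longrightarrow> (\<lambda>j. d - j) ` ({i..} \<inter> {..d}) = {0..(d::nat) - i}"
proof (rule set_eqI, rule iffI)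
  fix m assume "i \<le> d" "m \<in> {0..d - i}" then show "m \<in> (\<lambda>j. d - j) ` ({i..} \<inter> {..d})"
    by (intro image_eqI[of _ _ "d - m"]) auto
qed auto

lemma rv_lessThan: "i \<le> Suc d \<Longrightarrow> (\<lambda>j. d - j) ` ({..<i} \<inter> {..d}) = {Suc d - i..(d::nat)}"
proof (rule set_eqI, rule iffI)
  fix m assume "i \<le> Suc d" "m \<in> {Suc d - i..d}" then show "m \<in> (\<lambda>j. d - j) ` ({..<i} \<inter> {..d})"
    by (intro image_eqI[of _ _ "d - m"]) auto
qed auto

lemma rv_atLeast2: "i \<le> Suc d \<Longrightarrow> (\<lambda>j. d - j) ` ({Suc d - i..} \<inter> {..d}) = {..<(i::nat)}"
proof (rule set_eqI, rule iffI)
  fix m assume "i \<le> Suc d" "m \<in> {..<i}" then show "m \<in> (\<lambda>j. d - j) ` ({Suc d - i..} \<inter> {..d})"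
    by (intro image_eqI[of _ _ "d - m"]) auto
qed auto

lemma so_span:
  assumes vs: "vector_space s" and so: "standard_ordering s A B Vs d" and dg: "diagonalizable s A"
  shows "ssum s Vs {..d} = UNIV"
proof -
  interpret vector_space s by (rule vs)
  have "(\<Union>c. eigenspace s A c) \<subseteq> ssum s Vs {..d}"
  proof
    fix x assume "x \<in> (\<Union>c. eigenspace s A c)"
    then obtain c where c: "x \<in> eigenspace s A c" by auto
    show "x \<in> ssum s Vs {..d}"
    proof (cases "eigenspace s A c = {0}")
      case True then show ?thesis using c by (simp add: subspace_0)
    next
      case False
      then have "eigenspace s A c \<in> Vs ` {..d}"
        using so unfolding standard_ordering_def bij_betw_def is_eigenvalue_def by auto
      then obtain j where "j \<le> d" "Vs j = eigenspace s A c" by auto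
      then show ?thesis using c by (intro ssum_ge[of j]) auto
    qed
  qed
  then have "span (\<Union>c. eigenspace s A c) \<subseteq> ssum s Vs {..d}" by (intro span_minimal) auto
  then show ?thesis using dg unfolding diagonalizable_def by auto
qed

lemma so_ne:
  assumes so: "standard_ordering s A B Vs d" and j: "j \<le> d"
  shows "Vs j \<noteq> {0}"
proof -
  have "Vs j \<in> {eigenspace s A c | c. is_eigenvalue s A c}"
    using so j unfolding standard_ordering_def bij_betw_def by auto
  then show ?thesis by (auto simp: is_eigenvalue_def)
qed

locale mctx = vector_space s for s :: "'k::field \<Rightarrow> 'v::ab_group_add \<Rightarrow> 'v" (infixr \<open>*s\<close> 75) +
  fixes A As Ks :: "'v \<Rightarrow> 'v" and Vs Vss :: "nat \<Rightarrow> 'v set" and d :: nat and a as q :: 'k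
  assumes q0: "q \<noteq> 0" and nr: "\<forall>n>0. q ^ n \<noteq> 1"
    and td: "TD_pair s A As"
    and so1: "standard_ordering s A As Vs d" and so2: "standard_ordering s As A Vss d"
    and a0: "a \<noteq> 0" and as0: "as \<noteq> 0"
    and Vs_eq: "\<forall>i\<le>d. Vs i = eigenspace s A (a * q powi (2 * int i - int d))"
    and Vss_eq: "\<forall>i\<le>d. Vss i = eigenspace s As (as * q powi (int d - 2 * int i))"
    and linK: "Vector_Spaces.linear s s Ks"
    and Kdef: "\<forall>i\<le>d. \<forall>v\<in>dec_Ds0 s Vs Vss d i. Ks v = s (q powi (2 * int i - int d)) v"
begin

definition "th j = a * q powi (2 * int j - int d)"
definition "ths j = as * q powi (int d - 2 * int j)"
definition "kap j = q powi (2 * int j - int d)"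
definition "kap' j = q powi (int d - 2 * int j)"
definition "rv j = d - j"
definition "U1 = (\<lambda>i. ssum s Vss (id ` ({..i} \<inter> {..d})) \<inter> ssum s Vs (id ` ({i..} \<inter> {..d})))"
definition "E = (\<lambda>i. ssum s Vss (rv ` ({..i} \<inter> {..d})) \<inter> ssum s Vs (rv ` ({i..} \<inter> {..d})))"
definition "U3 = (\<lambda>i. ssum s Vss (id ` ({..i} \<inter> {..d})) \<inter> ssum s Vs (rv ` ({i..} \<inter> {..d})))"
definition "U6 = (\<lambda>i. ssum s Vss (rv ` ({..i} \<inter> {..d})) \<inter> ssum s Vs (id ` ({i..} \<inter> {..d})))"

lemma rv_eq: "rv = (\<lambda>j. d - j)" by (simp add: rv_def fun_eq_iff)

lemma linA: "Vector_Spaces.linear s s A" and linAs: "Vector_Spaces.linear s s As"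
  using td by (simp_all add: TD_pair_def)

lemma irr: "\<forall>W. subspace W \<and> A ` W \<subseteq> W \<and> As ` W \<subseteq> W \<longrightarrow> W = {0} \<or> W = UNIV"
  using td by (simp add: TD_pair_def)

lemma Vs_span: "ssum s Vs {..d} = UNIV"
  using so_span[OF vector_space_axioms so1] td by (simp add: TD_pair_def)
lemma Vss_span: "ssum s Vss {..d} = UNIV"
  using so_span[OF vector_space_axioms so2] td by (simp add: TD_pair_def)

lemma Vs_ne: "\<forall>j\<le>d. Vs j \<noteq> {0}" using so_ne[OF so1] by blast
lemma Vss_ne: "\<forall>j\<le>d. Vss j \<noteq> {0}" using so_ne[OF so2] by blast

lemma Vs_tri: "\<forall>j\<le>d. As ` Vs j \<subseteq> ssum s Vs ({j - 1, j, j + 1} \<inter> {..d})"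
  using so1 by (simp add: standard_ordering_def)
lemma Vss_tri: "\<forall>j\<le>d. A ` Vss j \<subseteq> ssum s Vss ({j - 1, j, j + 1} \<inter> {..d})"
  using so2 by (simp add: standard_ordering_def)

lemma Vs_eig: "\<forall>j\<le>d. Vs j = eigenspace s A (th j)" using Vs_eq by (simp add: th_def)
lemma Vss_eig: "\<forall>j\<le>d. Vss j = eigenspace s As (ths j)" using Vss_eq by (simp add: ths_def)

lemma kap_nz[simp]: "kap j \<noteq> 0" "kap' j \<noteq> 0" using q0 by (simp_all add: kap_def kap'_def)

lemma kap_inv: "kap' j * kap j = 1"
proof -
  have "q powi ((int d - 2 * int j) + (2 * int j - int d)) = q powi (int d - 2 * int j) * q powi (2 * int j - int d)"
    using q0 by (intro power_int_add) simp
  then show ?thesis by (simp add: kap_def kap'_def)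
qed

lemma th_inj: "inj_on th {..d}"
proof (rule inj_onI)
  fix i j assume "th i = th j"
  then have "q powi (2 * int i - int d) = q powi (2 * int j - int d)" using a0 by (simp add: th_def)
  then have "2 * int i - int d = 2 * int j - int d" by (rule qpow_inj[OF q0 nr])
  then show "i = j" by simp
qed

lemma ths_inj: "inj_on ths {..d}"
proof (rule inj_onI)
  fix i j assume "ths i = ths j"
  then have "q powi (int d - 2 * int i) = q powi (int d - 2 * int j)" using as0 by (simp add: ths_def)
  then have "int d - 2 * int i = int d - 2 * int j" by (rule qpow_inj[OF q0 nr])
  then show "i = j" by simp
qed

lemmas split_gen = td_split[OF vector_space_axioms linA linAs Vs_eig Vss_eig th_inj ths_inj Vs_ne Vss_ne
  Vs_span Vs_tri Vss_tri irr]

lemmas I1 = split_gen[of id id U1, OF disjI1[OF refl] disjI1[OF refl] U1_def]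
lemmas IE = split_gen[of rv rv E, OF disjI2[OF rv_eq] disjI2[OF rv_eq] E_def]
lemmas I3 = split_gen[of rv id U3, OF disjI2[OF rv_eq] disjI1[OF refl] U3_def]
lemmas I6 = split_gen[of id rv U6, OF disjI1[OF refl] disjI2[OF rv_eq] U6_def]

end


context mctx begin

lemma E_big: "d < j \<Longrightarrow> E j = {0}" using IE(8) by blast
lemma E_sub: "subspace (E j)" using IE(9) by blast
lemma rvA: "i \<le> d \<Longrightarrow> rv ` ({..i} \<inter> {..d}) = {d - i..d}"
  unfolding rv_eq by (rule rv_atMost)
lemma rvB: "i \<le> d \<Longrightarrow> rv ` ({i..} \<inter> {..d}) = {0..d - i}"
  unfolding rv_eq by (rule rv_atLeast)
lemma rvC: "i \<le> Suc d \<Longrightarrow> rv ` ({..<i} \<inter> {..d}) = {Suc d - i..d}"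
  unfolding rv_eq by (rule rv_lessThan)
lemma rvD: "i \<le> Suc d \<Longrightarrow> rv ` ({Suc d - i..} \<inter> {..d}) = {..<i}"
  unfolding rv_eq by (rule rv_atLeast2)

lemma E_dec: "j \<le> d \<Longrightarrow> E j = dec_Ds0 s Vs Vss d j"
  unfolding E_def dec_Ds0_def by (simp only: rvA rvB)

lemma F3: "i \<le> d \<Longrightarrow> ssum s E {i..} = ssum s Vs {0..d - i}"
  using IE(3) rvB[of i] by metis
lemma F4: "i \<le> d \<Longrightarrow> ssum s E {..i} = ssum s Vss {d - i..d}"
  using IE(1) rvA[of i] by metis
lemma F1: "j \<le> Suc d \<Longrightarrow> ssum s Vss {j..d} = ssum s E {..<Suc d - j}"
proof -
  assume j: "j \<le> Suc d"
  have "ssum s E {..<Suc d - j} = ssum s Vss (rv ` ({..<Suc d - j} \<inter> {..d}))" using IE(2) by blast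
  also have "rv ` ({..<Suc d - j} \<inter> {..d}) = {j..d}" using rvC[of "Suc d - j"] j by simp
  finally show ?thesis by simp
qed
lemma F2: "i \<le> Suc d \<Longrightarrow> ssum s Vs {..<i} = ssum s E {Suc d - i..}"
  using IE(3) rvD[of i] by metis

lemma E_span: "ssum s E UNIV = UNIV"
proof -
  have "ssum s E {0..} = ssum s Vs {0..d}" using F3[of 0] by simp
  then show ?thesis using Vs_span by (simp add: atLeast0AtMost)
qed

lemma K1: "v \<in> E j \<Longrightarrow> Ks v = kap j *s v"
proof (cases "j \<le> d")
  case True
  assume "v \<in> E j" then show ?thesis using Kdef True by (simp add: E_dec kap_def)
next
  case False
  assume "v \<in> E j" then show ?thesis using False E_big by (simp add: lin_props[OF linK])
qed

lemma Ks_bij: "bij Ks"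
  using diag_inj[OF linK K1 E_sub kap_nz(1) E_big E_span] diag_surj[OF linK K1 E_sub kap_nz(1) E_span]
  by (simp add: bij_def)

definition "Ki = inv Ks"

lemma linKi: "Vector_Spaces.linear s s Ki"
  unfolding Ki_def using Ks_bij linK
  by (simp add: linear_iff_module_hom bij_module_hom_imp_inv_module_hom)

lemma Ki_Ks[simp]: "Ki (Ks v) = v" using Ks_bij by (simp add: Ki_def bij_is_inj)
lemma Ks_Ki[simp]: "Ks (Ki v) = v" using Ks_bij by (simp add: Ki_def bij_is_surj surj_f_inv_f)

lemma K2: "v \<in> E j \<Longrightarrow> Ki v = kap' j *s v"
proof -
  assume v: "v \<in> E j"
  have "Ks (kap' j *s v) = v"
    using K1[OF subspace_scale[OF E_sub v]] kap_inv[of j] by (simp add: mult.commute)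
  then show ?thesis by (metis Ki_Ks)
qed

lemma TriK: "(\<lambda>v. Ks v - kap m *s v) ` ssum s E J \<subseteq> ssum s E (J - {m})"
  by (rule diag_tri[OF linK K1 E_sub])
lemma TriKi: "(\<lambda>v. Ki v - kap' m *s v) ` ssum s E J \<subseteq> ssum s E (J - {m})"
  by (rule diag_tri[OF linKi K2 E_sub])
lemma InvK: "Ks ` ssum s E J \<subseteq> ssum s E J"
  by (rule diag_inv[OF linK K1 E_sub])
lemma InvKi: "Ki ` ssum s E J \<subseteq> ssum s E J"
  by (rule diag_inv[OF linKi K2 E_sub])

lemma pw_add: "q powi (m + n) = q powi m * q powi n"
  using q0 by (intro power_int_add) simp

lemma kapS: "kap (Suc j) = q^2 * kap j"
proof -
  have e: "2 * int (Suc j) - int d = 2 + (2 * int j - int d)" by simp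
  show ?thesis unfolding kap_def e pw_add by simp
qed
lemma kap'S: "kap' j = q^2 * kap' (Suc j)"
proof -
  have e: "int d - 2 * int j = 2 + (int d - 2 * int (Suc j))" by simp
  show ?thesis unfolding kap'_def e pw_add by simp
qed
lemma thS: "th (Suc j) = q^2 * th j"
proof -
  have e: "2 * int (Suc j) - int d = 2 + (2 * int j - int d)" by simp
  show ?thesis unfolding th_def e pw_add by simp
qed
lemma thsS: "ths j = q^2 * ths (Suc j)"
proof -
  have e: "int d - 2 * int j = 2 + (int d - 2 * int (Suc j))" by simp
  show ?thesis unfolding ths_def e pw_add by simp
qed
lemma th_kap': "th j * kap' j = a"
  using kap_inv[of j] by (simp add: th_def kap_def kap'_def mult.assoc mult.commute)
lemma ths_kap: "ths j * kap j = as"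
  using kap_inv[of j] by (simp add: ths_def kap_def kap'_def mult.assoc)
lemma th_rv: "j \<le> d \<Longrightarrow> th (rv j) = a * kap' j"
  by (simp add: th_def kap'_def rv_def of_nat_diff algebra_simps)
lemma ths_rv: "j \<le> d \<Longrightarrow> ths (rv j) = as * kap j"
  by (simp add: ths_def kap_def rv_def of_nat_diff algebra_simps)
lemma kap'_rv: "i \<le> d \<Longrightarrow> kap' i = kap (d - i)"
  by (simp add: kap_def kap'_def of_nat_diff algebra_simps)

lemma th_inj': "th i = th j \<Longrightarrow> i = j"
proof -
  assume "th i = th j"
  then have "q powi (2 * int i - int d) = q powi (2 * int j - int d)" using a0 by (simp add: th_def)
  then have "2 * int i - int d = 2 * int j - int d" by (rule qpow_inj[OF q0 nr])
  then show "i = j" by simp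
qed
lemma ths_inj': "ths i = ths j \<Longrightarrow> i = j"
proof -
  assume "ths i = ths j"
  then have "q powi (int d - 2 * int i) = q powi (int d - 2 * int j)" using as0 by (simp add: ths_def)
  then have "int d - 2 * int i = int d - 2 * int j" by (rule qpow_inj[OF q0 nr])
  then show "i = j" by simp
qed

lemma q2: "q^2 \<noteq> 0" using q0 by simp

lemma C1: "Ks (A v) - q^2 *s A (Ks v) - ((1 - q^2) * a) *s v = 0"
proof -
  define h where "h = (\<lambda>v. Ks (A v) - q^2 *s A (Ks v) - ((1 - q^2) * a) *s v)"
  have lh: "Vector_Spaces.linear s s h"
    unfolding Vector_Spaces.linear_iff h_def using vector_space_axioms
    by (simp add: lin_props[OF linK] lin_props[OF linA] algebra_simps)
  have "h ` ssum s E UNIV \<subseteq> {0}"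
  proof (rule lin_ssum[OF lh])
    fix j x assume x: "x \<in> E j"
    show "h x \<in> {0}"
    proof (cases "j \<le> d")
      case False then show ?thesis using x E_big by (simp add: lin_props[OF lh])
    next
      case True
      define r where "r = A x - th (rv j) *s x"
      have r: "r \<in> E (Suc j)" using IE(5) x by (simp add: r_def)
      have Ax: "A x = (a * kap' j) *s x + r" using th_rv[OF True] by (simp add: r_def)
      have Kr: "Ks r = (q^2 * kap j) *s r" using K1[OF r] kapS by simp
      have Kx: "Ks x = kap j *s x" using K1[OF x] .
      have "h x = ((a * kap' j) * kap j - q^2 * (kap j * (a * kap' j)) - (1 - q^2) * a) *s x"
        unfolding h_def using Ax Kr Kx
        by (simp add: lin_props[OF linK] lin_props[OF linA] algebra_simps)
      also have "\<dots> = 0" using kap_inv[of j] by (simp add: algebra_simps)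
      finally show ?thesis by simp
    qed
  qed simp
  then have "h v = 0" using E_span by blast
  then show ?thesis by (simp only: h_def)
qed

lemma C2: "As (Ki v) - inverse (q^2) *s Ki (As v) - ((1 - inverse (q^2)) * as) *s v = 0"
proof -
  define h where "h = (\<lambda>v. As (Ki v) - inverse (q^2) *s Ki (As v) - ((1 - inverse (q^2)) * as) *s v)"
  have lh: "Vector_Spaces.linear s s h"
    unfolding Vector_Spaces.linear_iff h_def using vector_space_axioms
    by (simp add: lin_props[OF linKi] lin_props[OF linAs] algebra_simps)
  have "h ` ssum s E UNIV \<subseteq> {0}"
  proof (rule lin_ssum[OF lh])
    fix j x assume x: "x \<in> E j"
    show "h x \<in> {0}"
    proof (cases "j \<le> d")
      case False then show ?thesis using x E_big by (simp add: lin_props[OF lh])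
    next
      case True
      define l where "l = As x - ths (rv j) *s x"
      have Kl: "Ki l = (q^2 * kap' j) *s l"
      proof (cases j)
        case 0 then have "l = 0" using IE(6) x by (simp add: l_def)
        then show ?thesis by (simp add: lin_props[OF linKi])
      next
        case (Suc m)
        then have "l \<in> E m" using IE(7) x by (simp add: l_def)
        then show ?thesis using K2 kap'S[of m] Suc by simp
      qed
      have Ax: "As x = (as * kap j) *s x + l" using ths_rv[OF True] by (simp add: l_def)
      have Kx: "Ki x = kap' j *s x" using K2[OF x] .
      have "h x = (kap' j * (as * kap j) - inverse (q^2) * ((as * kap j) * kap' j) - (1 - inverse (q^2)) * as) *s x
                 + (kap' j - inverse (q^2) * (q^2 * kap' j)) *s l"
        unfolding h_def using Ax Kl Kx
        by (simp add: lin_props[OF linKi] lin_props[OF linAs] algebra_simps)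
      also have "\<dots> = 0" using kap_inv[of j] q2 by (simp add: algebra_simps)
      finally show ?thesis by simp
    qed
  qed simp
  then have "h v = 0" using E_span by blast
  then show ?thesis by (simp only: h_def)
qed

end


context mctx begin

lemma Vs_ev: "i \<le> d \<Longrightarrow> v \<in> Vs i \<Longrightarrow> A v = th i *s v"
  using Vs_eig by (auto simp: eigenspace_def)
lemma Vss_ev: "i \<le> d \<Longrightarrow> v \<in> Vss i \<Longrightarrow> As v = ths i *s v"
  using Vss_eig by (auto simp: eigenspace_def)

lemma CL1a:
  assumes i: "i \<le> d" and v: "v \<in> Vs i"
  shows "Ks v - kap' i *s v \<in> (if i = 0 then {0} else Vs (i - 1))"
proof -
  define w where "w = Ks v - kap' i *s v"
  have Av: "A v = th i *s v" by (rule Vs_ev[OF i v])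
  have e1: "q^2 *s A (Ks v) = th i *s Ks v - ((1 - q^2) * a) *s v"
    using C1[of v] unfolding Av by (simp add: lin_props[OF linK] algebra_simps)
  have "q^2 *s A w = q^2 *s A (Ks v) - (q^2 * (kap' i * th i)) *s v"
    by (simp add: w_def lin_props[OF linA] Av algebra_simps)
  also have "\<dots> = th i *s Ks v - a *s v"
    unfolding e1 using th_kap'[of i] by (simp add: algebra_simps mult.commute)
  also have "\<dots> = th i *s w"
    using th_kap'[of i] by (simp add: w_def scale_right_diff_distrib mult.commute)
  also have "\<dots> = q^2 *s ((inverse (q^2) * th i) *s w)"
    using q2 by simp
  finally have h: "q^2 *s A w = q^2 *s ((inverse (q^2) * th i) *s w)" .
  have Aw: "A w = (inverse (q^2) * th i) *s w" using h q2 by (metis scale_cancel_left)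
  show ?thesis
  proof (cases i)
    case 0
    have "w \<in> ssum s Vs {..d}" using Vs_span by simp
    moreover have "inverse (q^2) * th i \<notin> th ` {..d}"
    proof
      assume "inverse (q^2) * th i \<in> th ` {..d}"
      then obtain j where "inverse (q^2) * th i = th j" by auto
      then have "th i = th (Suc j)" using q2 thS[of j] by (simp add: field_simps)
      then show False using 0 th_inj' by fastforce
    qed
    ultimately have "w = 0"
      using eigen_zero[OF linA, of "{..d}" Vs th "inverse (q^2) * th i" w] Vs_ev Aw by auto
    then show ?thesis using 0 by (simp add: w_def)
  next
    case (Suc m)
    then have "inverse (q^2) * th i = th m" using thS[of m] q2 by simp
    then have "w \<in> eigenspace s A (th m)" using Aw by (simp add: eigenspace_def)
    then show ?thesis using Vs_eig Suc i by (simp add: w_def)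
  qed
qed

lemma CL2b:
  assumes i: "i \<le> d" and v: "v \<in> Vss i"
  shows "Ki v - kap i *s v \<in> (if i = d then {0} else Vss (Suc i))"
proof -
  define w where "w = Ki v - kap i *s v"
  have Av: "As v = ths i *s v" by (rule Vss_ev[OF i v])
  have e1: "As (Ki v) = inverse (q^2) *s (ths i *s Ki v) + ((1 - inverse (q^2)) * as) *s v"
    using C2[of v] unfolding Av by (simp add: lin_props[OF linKi] algebra_simps)
  have "As w = As (Ki v) - (kap i * ths i) *s v"
    by (simp add: w_def lin_props[OF linAs] Av algebra_simps)
  also have "\<dots> = (inverse (q^2) * ths i) *s w"
    unfolding e1 using ths_kap[of i] by (simp add: w_def algebra_simps mult.commute)
  finally have Aw: "As w = (inverse (q^2) * ths i) *s w" .
  have ee: "inverse (q^2) * ths i = ths (Suc i)" using thsS[of i] q2 by simp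
  show ?thesis
  proof (cases "i = d")
    case True
    have "w \<in> ssum s Vss {..d}" using Vss_span by simp
    moreover have "inverse (q^2) * ths i \<notin> ths ` {..d}"
    proof
      assume "inverse (q^2) * ths i \<in> ths ` {..d}"
      then obtain j where "j \<le> d" "ths (Suc i) = ths j" using ee by auto
      then show False using True ths_inj' by fastforce
    qed
    ultimately have "w = 0"
      using eigen_zero[OF linAs, of "{..d}" Vss ths "inverse (q^2) * ths i" w] Vss_ev Aw by auto
    then show ?thesis using True by (simp add: w_def)
  next
    case False
    then have "w \<in> eigenspace s As (ths (Suc i))" using Aw ee by (simp add: eigenspace_def)
    then show ?thesis using Vss_eig False i by (simp add: w_def)
  qed
qed

lemma CL1b:
  assumes i: "i \<le> d" and v: "v \<in> Vs i"
  shows "Ki v - kap i *s v \<in> ssum s Vs {..<i}"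
proof -
  define w where "w = Ks v - kap' i *s v"
  have "w \<in> ssum s Vs {..<i}"
  proof (cases i)
    case 0 then show ?thesis using CL1a[OF i v] by (simp add: w_def)
  next
    case (Suc m)
    then have "w \<in> Vs m" using CL1a[OF i v] by (simp add: w_def)
    then show ?thesis using Suc by (intro ssum_ge[of m]) auto
  qed
  then have "w \<in> ssum s E {Suc d - i..}" using F2[of i] i by simp
  then have kw: "Ki w \<in> ssum s Vs {..<i}" using InvKi F2[of i] i by auto
  have "v = Ki (Ks v)" by simp
  also have "Ks v = kap' i *s v + w" by (simp add: w_def)
  finally have ve: "v = kap' i *s Ki v + Ki w" by (simp add: lin_props[OF linKi])
  have "kap i *s v = kap i *s (kap' i *s Ki v + Ki w)" using ve by (rule arg_cong)
  also have "\<dots> = (kap i * kap' i) *s Ki v + kap i *s Ki w" by (simp add: scale_right_distrib)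
  also have "kap i * kap' i = 1" using kap_inv[of i] by (simp add: mult.commute)
  finally have "kap i *s v = Ki v + kap i *s Ki w" by simp
  then have "Ki v - kap i *s v = - (kap i *s Ki w)" by (simp add: algebra_simps)
  then show ?thesis using kw by (simp add: subspace_neg subspace_scale)
qed

lemma CL2a:
  assumes i: "i \<le> d" and v: "v \<in> Vss i"
  shows "Ks v - kap' i *s v \<in> ssum s Vss {Suc i..d}"
proof -
  have "v \<in> ssum s Vss {i..d}" using v i by (intro ssum_ge) auto
  then have "v \<in> ssum s E {..<Suc d - i}" using F1[of i] i by simp
  then have "Ks v - kap (d - i) *s v \<in> ssum s E ({..<Suc d - i} - {d - i})" using TriK by blast
  moreover have "{..<Suc d - i} - {d - i} = {..<Suc d - Suc i}" using i by auto
  ultimately show ?thesis using F1[of "Suc i"] i kap'_rv[OF i] by simp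
qed

lemma KsFlag: "Ks ` ssum s Vs {i..d} \<subseteq> ssum s Vs {i - 1..d}"
proof (rule lin_ssum[OF linK])
  fix j x assume j: "j \<in> {i..d}" and x: "x \<in> Vs j"
  have "Ks x = kap' j *s x + (Ks x - kap' j *s x)" by simp
  moreover have "kap' j *s x \<in> ssum s Vs {i - 1..d}" using j x
    by (intro subspace_scale[OF ssum_subspace] ssum_ge[of j]) auto
  moreover have "Ks x - kap' j *s x \<in> ssum s Vs {i - 1..d}"
  proof (cases j)
    case 0 then show ?thesis using CL1a[of j x] j x by (simp add: subspace_0)
  next
    case (Suc m) then have "Ks x - kap' j *s x \<in> Vs m" using CL1a[of j x] j x by simp
    then show ?thesis using j Suc by (intro ssum_ge[of m]) auto
  qed
  ultimately show "Ks x \<in> ssum s Vs {i - 1..d}" by (metis subspace_add ssum_subspace)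
qed simp

lemma KiFlag: "i \<le> d \<Longrightarrow> Ki ` ssum s Vss {..i} \<subseteq> ssum s Vss {..min (Suc i) d}"
proof (rule lin_ssum[OF linKi])
  fix j x assume i: "i \<le> d" and j: "j \<in> {..i}" and x: "x \<in> Vss j"
  have jd: "j \<le> d" using i j by simp
  have "Ki x = kap j *s x + (Ki x - kap j *s x)" by simp
  moreover have "kap j *s x \<in> ssum s Vss {..min (Suc i) d}" using j x jd
    by (intro subspace_scale[OF ssum_subspace] ssum_ge[of j]) auto
  moreover have "Ki x - kap j *s x \<in> ssum s Vss {..min (Suc i) d}"
  proof (cases "j = d")
    case True then show ?thesis using CL2b[of j x] jd x by (simp add: subspace_0)
  next
    case False then have "Ki x - kap j *s x \<in> Vss (Suc j)" using CL2b[of j x] j x jd by simp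
    then show ?thesis using j False jd by (intro ssum_ge[of "Suc j"]) auto
  qed
  ultimately show "Ki x \<in> ssum s Vss {..min (Suc i) d}" by (metis subspace_add ssum_subspace)
qed simp

end


lemma S1: "i \<le> d \<Longrightarrow> {n. n \<le> d \<and> int n \<in> {0..int i - 1}} = {..<i}" by auto
lemma S2: "{n. n \<le> d \<and> int n \<in> {int i + 1..int d}} = {Suc i..d}" by auto
lemma S3: "i \<le> d \<Longrightarrow> {n. n \<le> d \<and> int n \<in> {int i - 1..int d}} = {i - 1..d}" by auto
lemma S4: "{n. n \<le> d \<and> int n \<in> {0..int i + 1}} = {..min (Suc i) d}" by auto

lemma Iad: "{j..} \<inter> {..d} = {j..(d::nat)}" by auto

context mctx begin

lemma U1_dec: "j \<le> d \<Longrightarrow> U1 j = dec_0sD s Vs Vss d j"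
  by (simp add: U1_def dec_0sD_def atLeast0AtMost Iad)
lemma U3_dec: "j \<le> d \<Longrightarrow> U3 j = dec_0s0 s Vs Vss d j"
  unfolding U3_def dec_0s0_def by (simp only: rvB) (simp add: atLeast0AtMost)
lemma U6_dec: "j \<le> d \<Longrightarrow> U6 j = dec_DsD s Vs Vss d j"
  unfolding U6_def dec_DsD_def by (simp only: rvA) (simp add: Iad)

lemma shift_sub: "shift_img s K c X \<subseteq> Y \<longleftrightarrow> (\<forall>v\<in>X. K v - c *s v \<in> Y)"
  by (auto simp: shift_img_def)

lemma cl1a: "i \<le> d \<Longrightarrow> shift_img s Ks (kap' i) (Vs i) \<subseteq> (if i = 0 then {0} else Vs (i - 1))"
  using CL1a by (simp only: shift_sub) blast
lemma cl1b: "i \<le> d \<Longrightarrow> shift_img s Ki (kap i) (Vs i) \<subseteq> ssum s Vs {..<i}"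
  using CL1b by (simp only: shift_sub) blast
lemma cl2a: "i \<le> d \<Longrightarrow> shift_img s Ks (kap' i) (Vss i) \<subseteq> ssum s Vss {Suc i..d}"
  using CL2a by (simp only: shift_sub) blast
lemma cl2b: "i \<le> d \<Longrightarrow> shift_img s Ki (kap i) (Vss i) \<subseteq> (if i = d then {0} else Vss (Suc i))"
  using CL2b by (simp only: shift_sub) blast

lemma cl3a: "i \<le> d \<Longrightarrow> Ks ` dec_0sD s Vs Vss d i \<subseteq> ssum s Vs {i - 1..d}"
  using KsFlag[of i] by (auto simp: dec_0sD_def)
lemma cl3b: "i \<le> d \<Longrightarrow> Ki ` dec_0sD s Vs Vss d i \<subseteq> ssum s Vss {..min (Suc i) d}"
  using KiFlag[of i] by (auto simp: dec_0sD_def atLeast0AtMost)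

lemma Esuc_big: "ssum s E {Suc d..} = {0}"
proof -
  have "ssum s E {Suc d..} \<subseteq> {0}" by (rule ssum_le) (auto simp: E_big)
  then show ?thesis using subspace_0[OF ssum_subspace] by blast
qed

lemma cl4a: "i \<le> d \<Longrightarrow> shift_img s Ks (kap i) (dec_0s0 s Vs Vss d i) \<subseteq> ssum s E {Suc i..}"
proof -
  assume i: "i \<le> d"
  have "dec_0s0 s Vs Vss d i \<subseteq> ssum s E {i..}" using F3[OF i] by (auto simp: dec_0s0_def)
  moreover have "{i..} - {i} = {Suc i..}" by auto
  ultimately show ?thesis using TriK[of i "{i..}"] by (auto simp: shift_img_def)
qed

lemma cl4b: "i \<le> d \<Longrightarrow> shift_img s Ki (kap' i) (dec_0s0 s Vs Vss d i) \<subseteq> (if i = d then {0} else dec_0s0 s Vs Vss d (Suc i))"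
proof -
  assume i: "i \<le> d"
  have "{i..} - {i} = {Suc i..}" by auto
  then have t: "Ki v - kap' i *s v \<in> ssum s E {Suc i..}" if "v \<in> dec_0s0 s Vs Vss d i" for v
    using that F3[OF i] TriKi[of i "{i..}"] by (auto simp: dec_0s0_def)
  show ?thesis
  proof (cases "i = d")
    case True then show ?thesis using t Esuc_big by (auto simp: shift_img_def)
  next
    case False
    then have i': "Suc i \<le> d" using i by simp
    have "Ki v - kap' i *s v \<in> dec_0s0 s Vs Vss d (Suc i)" if v: "v \<in> dec_0s0 s Vs Vss d i" for v
    proof -
      have "Ki v - kap' i *s v \<in> ssum s Vs {0..d - Suc i}" using t[OF v] F3[OF i'] by simp
      moreover have "v \<in> ssum s Vss {..i}" using v by (simp add: dec_0s0_def atLeast0AtMost)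
      then have "Ki v \<in> ssum s Vss {..Suc i}" using KiFlag[OF i] i' by (auto simp: min_def)
      moreover have "v \<in> ssum s Vss {..Suc i}" using v ssum_mono[of "{..i}" "{..Suc i}" Vss]
        by (auto simp: dec_0s0_def atLeast0AtMost)
      ultimately show ?thesis
        by (simp add: dec_0s0_def atLeast0AtMost subspace_diff subspace_scale)
    qed
    then show ?thesis using False by (auto simp: shift_img_def)
  qed
qed

lemma cl5: "i \<le> d \<Longrightarrow> shift_img s Ks (kap i) (dec_Ds0 s Vs Vss d i) = {0} \<and>
   shift_img s Ki (kap' i) (dec_Ds0 s Vs Vss d i) = {0}"
proof -
  assume i: "i \<le> d"
  have z: "0 \<in> dec_Ds0 s Vs Vss d i" unfolding E_dec[OF i, symmetric] by (rule subspace_0[OF E_sub])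
  have "Ks v - kap i *s v = 0" "Ki v - kap' i *s v = 0" if "v \<in> dec_Ds0 s Vs Vss d i" for v
    using that K1 K2 E_dec[OF i] by simp_all
  then show ?thesis using z
    by (auto simp: shift_img_def lin_props[OF linK] lin_props[OF linKi] image_iff intro!: bexI[of _ 0])
qed

lemma cl6a: "i \<le> d \<Longrightarrow> shift_img s Ks (kap i) (dec_DsD s Vs Vss d i) \<subseteq> (if i = 0 then {0} else dec_DsD s Vs Vss d (i - 1))"
proof -
  assume i: "i \<le> d"
  have st: "{..<Suc i} - {i} = {..<i}" by auto
  have t: "Ks v - kap i *s v \<in> ssum s E {..<i}" if "v \<in> dec_DsD s Vs Vss d i" for v
  proof -
    have "v \<in> ssum s E {..<Suc d - (d - i)}" using that F1[of "d - i"] by (simp add: dec_DsD_def)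
    then have "v \<in> ssum s E {..<Suc i}" using i by (simp add: Suc_diff_le)
    then show ?thesis using TriK[of i "{..<Suc i}"] unfolding st by blast
  qed
  show ?thesis
  proof (cases i)
    case 0 then show ?thesis using t by (auto simp: shift_img_def)
  next
    case (Suc m)
    have "Ks v - kap i *s v \<in> dec_DsD s Vs Vss d m" if v: "v \<in> dec_DsD s Vs Vss d i" for v
    proof -
      have "ssum s E {..<i} = ssum s Vss {Suc d - i..d}" using F1[of "Suc d - i"] i by simp
      then have "Ks v - kap i *s v \<in> ssum s Vss {d - m..d}" using t[OF v] Suc i by simp
      moreover have "v \<in> ssum s Vs {i..d}" using v by (simp add: dec_DsD_def)
      then have "Ks v \<in> ssum s Vs {m..d}" "v \<in> ssum s Vs {m..d}"
        using KsFlag[of i] Suc ssum_mono[of "{i..d}" "{m..d}" Vs] by auto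
      ultimately show ?thesis
        by (simp add: dec_DsD_def subspace_diff subspace_scale)
    qed
    then show ?thesis using Suc by (auto simp: shift_img_def)
  qed
qed

lemma cl6b: "i \<le> d \<Longrightarrow> shift_img s Ki (kap' i) (dec_DsD s Vs Vss d i) \<subseteq> ssum s E {..<i}"
proof -
  assume i: "i \<le> d"
  have st: "{..<Suc i} - {i} = {..<i}" by auto
  have "Ki v - kap' i *s v \<in> ssum s E {..<i}" if "v \<in> dec_DsD s Vs Vss d i" for v
  proof -
    have "v \<in> ssum s E {..<Suc d - (d - i)}" using that F1[of "d - i"] by (simp add: dec_DsD_def)
    then have "v \<in> ssum s E {..<Suc i}" using i by (simp add: Suc_diff_le)
    then show ?thesis using TriKi[of i "{..<Suc i}"] unfolding st by blast
  qed
  then show ?thesis by (auto simp: shift_img_def)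
qed

lemma dv1: "dec_0D Vs Vss d = Vs" by (simp add: fun_eq_iff dec_0D_def)
lemma dv2: "dec_0sDs Vs Vss d = Vss" by (simp add: fun_eq_iff dec_0sDs_def)
lemma T1b: "i \<le> d \<Longrightarrow> ssum s (ext_idx Vs d) {0..int i - 1} = ssum s Vs {..<i}"
  unfolding ext_ssum by (simp only: S1)
lemma T2a: "ssum s (ext_idx Vss d) {int i + 1..int d} = ssum s Vss {Suc i..d}"
  unfolding ext_ssum by (simp only: S2)

lemma U1_big: "d < j \<Longrightarrow> U1 j = {0}" using I1(8) by blast
lemma U3_big: "d < j \<Longrightarrow> U3 j = {0}" using I3(8) by blast

lemma T3a: "i \<le> d \<Longrightarrow> ssum s (ext_idx (dec_0sD s Vs Vss d) d) {int i - 1..int d} = ssum s Vs {i - 1..d}"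
proof -
  assume i: "i \<le> d"
  have "ssum s (ext_idx (dec_0sD s Vs Vss d) d) {int i - 1..int d} = ssum s (dec_0sD s Vs Vss d) ({i - 1..} \<inter> {..d})"
    unfolding ext_ssum S3[OF i] Iad ..
  also have "\<dots> = ssum s U1 ({i - 1..} \<inter> {..d})" by (rule ssum_cong) (simp add: U1_dec)
  also have "\<dots> = ssum s U1 {i - 1..}" by (rule ssum_fin[OF U1_big, symmetric])
  also have "\<dots> = ssum s Vs {i - 1..d}" using I1(3) by (simp add: Iad)
  finally show ?thesis .
qed

lemma T3b: "i \<le> d \<Longrightarrow> ssum s (ext_idx (dec_0sD s Vs Vss d) d) {0..int i + 1} = ssum s Vss {..min (Suc i) d}"
proof -
  assume i: "i \<le> d"
  have "ssum s (ext_idx (dec_0sD s Vs Vss d) d) {0..int i + 1} = ssum s (dec_0sD s Vs Vss d) {..min (Suc i) d}"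
    unfolding ext_ssum S4 ..
  also have "\<dots> = ssum s U1 {..min (Suc i) d}" by (rule ssum_cong) (simp add: U1_dec)
  also have "\<dots> = ssum s Vss {..min (Suc i) d}" using I1(1) by simp
  finally show ?thesis .
qed

lemma T4a: "i \<le> d \<Longrightarrow> ssum s (ext_idx (dec_0s0 s Vs Vss d) d) {int i + 1..int d} = ssum s E {Suc i..}"
proof -
  assume i: "i \<le> d"
  have "ssum s (ext_idx (dec_0s0 s Vs Vss d) d) {int i + 1..int d} = ssum s (dec_0s0 s Vs Vss d) ({Suc i..} \<inter> {..d})"
    unfolding ext_ssum S2 Iad ..
  also have "\<dots> = ssum s U3 ({Suc i..} \<inter> {..d})" by (rule ssum_cong) (simp add: U3_dec)
  also have "\<dots> = ssum s U3 {Suc i..}" by (rule ssum_fin[OF U3_big, symmetric])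
  also have "\<dots> = ssum s E {Suc i..}" using I3(3) IE(3) by simp
  finally show ?thesis .
qed

lemma T6b: "i \<le> d \<Longrightarrow> ssum s (ext_idx (dec_DsD s Vs Vss d) d) {0..int i - 1} = ssum s E {..<i}"
proof -
  assume i: "i \<le> d"
  have "ssum s (ext_idx (dec_DsD s Vs Vss d) d) {0..int i - 1} = ssum s (dec_DsD s Vs Vss d) {..<i}"
    unfolding ext_ssum S1[OF i] ..
  also have "\<dots> = ssum s U6 {..<i}" using i by (intro ssum_cong) (simp add: U6_dec)
  also have "\<dots> = ssum s E {..<i}" using I6(2) IE(2) by simp
  finally show ?thesis .
qed

end


theorem theorem11p2:
  fixes s :: "'k::field \<Rightarrow> 'v::ab_group_add \<Rightarrow> 'v"
    and A As Ks :: "'v \<Rightarrow> 'v"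
    and Vs Vss :: "nat \<Rightarrow> 'v set"
    and d :: nat and a as q :: 'k
  assumes "alg_closed_field TYPE('k)"
    and "q \<noteq> 0" and "\<forall>n>0. q ^ n \<noteq> 1"
    and "vector_space s" and "fin_dim s" and "\<exists>v::'v. v \<noteq> 0"
    and "TD_pair s A As"
    and "standard_ordering s A As Vs d"
    and "standard_ordering s As A Vss d"
    and "a \<noteq> 0" and "as \<noteq> 0"
    and "\<forall>i\<le>d. Vs i = eigenspace s A (a * q powi (2 * int i - int d))"
    and "\<forall>i\<le>d. Vss i = eigenspace s As (as * q powi (int d - 2 * int i))"
    and "Vector_Spaces.linear s s Ks"
    and "\<forall>i\<le>d. \<forall>v\<in>dec_Ds0 s Vs Vss d i. Ks v = s (q powi (2 * int i - int d)) v"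
  shows "\<forall>i\<le>d.
    (let U = ext_idx (dec_0D Vs Vss d) d in
       shift_img s Ks (q powi (int d - 2 * int i)) (U (int i)) \<subseteq> U (int i - 1) \<and>
       shift_img s (inv Ks) (q powi (2 * int i - int d)) (U (int i)) \<subseteq> ssum s U {0..int i - 1}) \<and>
    (let U = ext_idx (dec_0sDs Vs Vss d) d in
       shift_img s Ks (q powi (int d - 2 * int i)) (U (int i)) \<subseteq> ssum s U {int i + 1..int d} \<and>
       shift_img s (inv Ks) (q powi (2 * int i - int d)) (U (int i)) \<subseteq> U (int i + 1)) \<and>
    (let U = ext_idx (dec_0sD s Vs Vss d) d in
       Ks ` U (int i) \<subseteq> ssum s U {int i - 1..int d} \<and>
       inv Ks ` U (int i) \<subseteq> ssum s U {0..int i + 1}) \<and>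
    (let U = ext_idx (dec_0s0 s Vs Vss d) d in
       shift_img s Ks (q powi (2 * int i - int d)) (U (int i)) \<subseteq> ssum s U {int i + 1..int d} \<and>
       shift_img s (inv Ks) (q powi (int d - 2 * int i)) (U (int i)) \<subseteq> U (int i + 1)) \<and>
    (let U = ext_idx (dec_Ds0 s Vs Vss d) d in
       shift_img s Ks (q powi (2 * int i - int d)) (U (int i)) = {0} \<and>
       shift_img s (inv Ks) (q powi (int d - 2 * int i)) (U (int i)) = {0}) \<and>
    (let U = ext_idx (dec_DsD s Vs Vss d) d in
       shift_img s Ks (q powi (2 * int i - int d)) (U (int i)) \<subseteq> U (int i - 1) \<and>
       shift_img s (inv Ks) (q powi (int d - 2 * int i)) (U (int i)) \<subseteq> ssum s U {0..int i - 1})"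
proof -
  interpret M: mctx s A As Ks Vs Vss d a as q
    using assms by (simp add: mctx_def mctx_axioms_def)
  have k1: "\<And>i. q powi (int d - 2 * int i) = M.kap' i" by (simp add: M.kap'_def)
  have k2: "\<And>i. q powi (2 * int i - int d) = M.kap i" by (simp add: M.kap_def)
  have ki: "inv Ks = M.Ki" by (simp add: M.Ki_def)
  show ?thesis
    apply (intro allI impI)
    subgoal premises p for i
      unfolding Let_def M.dv1 M.dv2 M.T1b[OF p] M.T2a M.T3a[OF p] M.T3b[OF p] M.T4a[OF p] M.T6b[OF p]
        ext_i[OF p] ext_im[OF p] ext_ip[OF p] M.dv1 M.dv2 k1 k2 ki
      apply (insert M.cl1a[OF p] M.cl1b[OF p] M.cl2a[OF p] M.cl2b[OF p] M.cl3a[OF p] M.cl3b[OF p]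
        M.cl4a[OF p] M.cl4b[OF p] conjunct1[OF M.cl5[OF p]] conjunct2[OF M.cl5[OF p]] M.cl6a[OF p] M.cl6b[OF p])
      apply (intro conjI)
      apply assumption+
      done
    done
qed


end
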